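(* Let $\mathbf{z}=(\mathbf{x},y)$ and $\mathbf{z}'=(\mathbf{x}',y')$ be drawn independently from a distribution $\mathbb{P}$ on $\mathcal{X}\times\{-1,+1\}$, let $p=\Pr(y=1)\in(0,1)$, and let $h(\mathbf{w};\mathbf{x})$ be a scoring function parameterized by $\mathbf{w}\in\mathbb{R}^d$ with $0\le h(\mathbf{w};\mathbf{x})\le 1$. Define $$P(\mathbf{w})=\mathbb{E}_{\mathbf{z},\mathbf{z}'}\left[(1-h(\mathbf{w};\mathbf{x})+h(\mathbf{w};\mathbf{x}'))^2\,\middle\vert\, y=1,y'=-1\right]$$ and, for $\mathbf{w}\in\mathbb{R}^d$, $a,b,\alpha\in\mathbb{R}$, $$F(\mathbf{w},a,b,\alpha;\mathbf{z})=(1-p)(h(\mathbf{w};\mathbf{x})-a)^2\mathbb{I}_{[y=1]}+p(h(\mathbf{w};\mathbf{x})-b)^2\mathbb{I}_{[y=-1]}+2(1+\alpha)\big(p\,h(\mathbf{w};\mathbf{x})\mathbb{I}_{[y=-1]}-(1-p)h(\mathbf{w};\mathbf{x})\mathbb{I}_{[y=1]}\big)-p(1-p)\alpha^2,$$ $f(\mathbf{w},a,b,\alpha)=\mathbb{E}_{\mathbf{z}}[F(\mathbf{w},a,b,\alpha;\mathbf{z})]$. Then the problem $\min_{\mathbf{w}\in\mathbb{R}^d}P(\mathbf{w})$ is equivalent to the saddle-point problem $\min_{\mathbf{w}\in\mathbb{R}^d,(a,b)\in\mathbb{R}^2}\max_{\alpha\in\mathbb{R}} f(\mathbf{w},a,b,\alpha)$,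 in the sense that for every $\mathbf{w}\in\mathbb{R}^d$, $$P(\mathbf{w})=1+\frac{1}{p(1-p)}\min_{(a,b)\in\mathbb{R}^2}\max_{\alpha\in\mathbb{R}}f(\mathbf{w},a,b,\alpha).$$
   Context: $\mathbb{I}_{[\cdot]}$ denotes the indicator function. The expectation conditioned on $y=1,y'=-1$ is over the independent pair $(\mathbf{z},\mathbf{z}')$. *)

theory Defs
  imports "HOL-Probability.Probability"
begin

definition ind :: "bool \<Rightarrow> real" where
  "ind b = (if b then 1 else 0)"

definition pos_prob :: "('x \<times> real) measure \<Rightarrow> real" where
  "pos_prob M = measure M {z \<in> space M. snd z = 1}"

text \<open>P(w): conditional expectation over the independent pair (z, z') drawn from M \<otimes> M,
  conditioned on the event y = 1, y' = -1 (elementary conditional expectation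
  E[X 1_A] / Pr(A), with Pr(A) = p (1-p)).\<close>
definition P_obj :: "('x \<times> real) measure \<Rightarrow> ('w \<Rightarrow> 'x \<Rightarrow> real) \<Rightarrow> 'w \<Rightarrow> real" where
  "P_obj M h w =
     (\<integral>zz. (1 - h w (fst (fst zz)) + h w (fst (snd zz)))\<^sup>2
            * ind (snd (fst zz) = 1) * ind (snd (snd zz) = -1) \<partial>(M \<Otimes>\<^sub>M M))
     / measure (M \<Otimes>\<^sub>M M) {zz \<in> space (M \<Otimes>\<^sub>M M). snd (fst zz) = 1 \<and> snd (snd zz) = -1}"

definition F_obj :: "real \<Rightarrow> ('w \<Rightarrow> 'x \<Rightarrow> real) \<Rightarrow> 'w \<Rightarrow> real \<Rightarrow> real \<Rightarrow> real \<Rightarrow> 'x \<times> real \<Rightarrow> real" where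
  "F_obj p h w a b \<alpha> z =
     (1 - p) * (h w (fst z) - a)\<^sup>2 * ind (snd z = 1)
     + p * (h w (fst z) - b)\<^sup>2 * ind (snd z = -1)
     + 2 * (1 + \<alpha>) * (p * h w (fst z) * ind (snd z = -1) - (1 - p) * h w (fst z) * ind (snd z = 1))
     - p * (1 - p) * \<alpha>\<^sup>2"

definition f_obj :: "('x \<times> real) measure \<Rightarrow> ('w \<Rightarrow> 'x \<Rightarrow> real) \<Rightarrow> 'w \<Rightarrow> real \<Rightarrow> real \<Rightarrow> real \<Rightarrow> real" where
  "f_obj M h w a b \<alpha> = (\<integral>z. F_obj (pos_prob M) h w a b \<alpha> z \<partial>M)"

definition is_max_of :: "real set \<Rightarrow> real \<Rightarrow> bool" where
  "is_max_of S v \<longleftrightarrow> v \<in> S \<and> (\<forall>u\<in>S. u \<le> v)"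

definition is_min_of :: "real set \<Rightarrow> real \<Rightarrow> bool" where
  "is_min_of S v \<longleftrightarrow> v \<in> S \<and> (\<forall>u\<in>S. v \<le> u)"

end

theory Submission
  imports Defs
begin

lemma alg:
  fixes p q Aa Ab Ba Bb Pv :: real and f :: "real \<Rightarrow> real \<Rightarrow> real \<Rightarrow> real"
  assumes p: "0 < p" "p < 1" and q: "q = 1 - p"
    and f: "\<And>a b \<alpha>. f a b \<alpha> = q*Ba - 2*a*q*Aa + q*a\<^sup>2*p + p*Bb - 2*b*p*Ab + p*b\<^sup>2*q
              + 2*(1+\<alpha>)*p*Ab - 2*(1+\<alpha>)*q*Aa - p*q*\<alpha>\<^sup>2"
    and Pv: "Pv = (q*(p - 2*Aa + Ba) + 2*Ab*(p - Aa) + p*Bb) / (p*q)"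
  shows "(\<forall>a b. \<exists>v. is_max_of (range (f a b)) v)
     \<and> (\<exists>v. is_min_of ((\<lambda>(a, b). Sup (range (f a b))) ` UNIV) v \<and> Pv = 1 + v / (p*(1-p)))"
proof -
  have q0: "q > 0" using p q by simp
  have pq0: "p*q > 0" using p q0 by simp
  define a0 where "a0 = Aa/p"
  define b0 where "b0 = Ab/q"
  have Aa: "Aa = p*a0" unfolding a0_def using p by simp
  have Ab: "Ab = q*b0" unfolding b0_def using q0 by simp
  define r where "r = b0 - a0"
  define C where "C = (\<lambda>a b. q*Ba - 2*a*q*Aa + q*a\<^sup>2*p + p*Bb - 2*b*p*Ab + p*b\<^sup>2*q + 2*p*q*r)"
  have fe: "f a b \<alpha> = C a b + p*q*r\<^sup>2 - p*q*(\<alpha> - r)\<^sup>2" for a b \<alpha>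
    unfolding f C_def Aa Ab r_def by (simp add: power2_eq_square algebra_simps)
  have mx: "is_max_of (range (f a b)) (C a b + p*q*r\<^sup>2)" for a b
    unfolding is_max_of_def
  proof
    show "C a b + p*q*r\<^sup>2 \<in> range (f a b)"
      by (rule range_eqI[of _ _ r]) (simp add: fe)
    show "\<forall>u\<in>range (f a b). u \<le> C a b + p*q*r\<^sup>2"
      using pq0 by (auto simp: fe)
  qed
  have sp: "Sup (range (f a b)) = C a b + p*q*r\<^sup>2" for a b
    using mx[of a b] unfolding is_max_of_def by (intro cSup_eq_maximum) auto
  have Ce: "C a b = C a0 b0 + q*p*(a-a0)\<^sup>2 + p*q*(b-b0)\<^sup>2" for a b
    unfolding C_def Aa Ab by (simp add: power2_eq_square algebra_simps)
  define v where "v = C a0 b0 + p*q*r\<^sup>2"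
  have mn: "is_min_of ((\<lambda>(a, b). Sup (range (f a b))) ` UNIV) v"
    unfolding is_min_of_def
  proof
    show "v \<in> (\<lambda>(a, b). Sup (range (f a b))) ` UNIV"
      by (rule image_eqI[of _ _ "(a0,b0)"]) (auto simp: sp v_def)
    have "v \<le> Sup (range (f a b))" for a b
    proof -
      have "0 \<le> q*p*(a-a0)\<^sup>2 + p*q*(b-b0)\<^sup>2" using p q0 by simp
      then show ?thesis unfolding sp v_def by (subst Ce[of a b]) linarith
    qed
    then show "\<forall>u\<in>(\<lambda>(a, b). Sup (range (f a b))) ` UNIV. v \<le> u"
      by auto
  qed
  have num: "q*(p - 2*Aa + Ba) + 2*Ab*(p - Aa) + p*Bb = p*q + v"
    unfolding v_def C_def Aa Ab r_def q by (simp add: power2_eq_square algebra_simps)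
  have "Pv = 1 + v/(p*q)"
    unfolding Pv num using p q0 by (simp add: add_divide_distrib)
  then show ?thesis using mx mn q by blast
qed

theorem proposition1:
  fixes M :: "('x \<times> real) measure"
    and h :: "real ^ 'd \<Rightarrow> 'x \<Rightarrow> real"
  assumes "prob_space M"
    and "AE z in M. snd z \<in> {-1, 1}"
    and "snd \<in> borel_measurable M"
    and "\<And>w. (\<lambda>z. h w (fst z)) \<in> borel_measurable M"
    and "0 < pos_prob M" and "pos_prob M < 1"
    and "\<And>w x. 0 \<le> h w x \<and> h w x \<le> 1"
  shows "\<forall>w. (\<forall>a b. \<exists>v. is_max_of (range (f_obj M h w a b)) v)
           \<and> (\<exists>v. is_min_of ((\<lambda>(a, b). Sup (range (f_obj M h w a b))) ` UNIV) v
                  \<and> P_obj M h w = 1 + v / (pos_prob M * (1 - pos_prob M)))"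
proof
  fix w
  interpret prob_space M by fact
  interpret PP: pair_prob_space M M by unfold_locales
  note sndm[measurable] = assms(3)
  define p where "p = pos_prob M"
  define q where "q = 1 - p"
  define H where "H = (\<lambda>z::'x \<times> real. h w (fst z))"
  define I1 where "I1 = (\<lambda>z::'x \<times> real. ind (snd z = 1))"
  define I2 where "I2 = (\<lambda>z::'x \<times> real. ind (snd z = -1))"
  define H1 where "H1 = (\<lambda>z. H z * I1 z)"
  define H2 where "H2 = (\<lambda>z. H z * I2 z)"
  define HH1 where "HH1 = (\<lambda>z. (H z)\<^sup>2 * I1 z)"
  define HH2 where "HH2 = (\<lambda>z. (H z)\<^sup>2 * I2 z)"
  have Hm[measurable]: "H \<in> borel_measurable M" unfolding H_def by (rule assms(4))
  have I1m[measurable]: "I1 \<in> borel_measurable M" unfolding I1_def ind_def by measurable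
  have I2m[measurable]: "I2 \<in> borel_measurable M" unfolding I2_def ind_def by measurable
  have Hb: "0 \<le> H z" "H z \<le> 1" for z unfolding H_def using assms(7) by auto
  have I1b: "0 \<le> I1 z" "I1 z \<le> 1" for z unfolding I1_def ind_def by auto
  have I2b: "0 \<le> I2 z" "I2 z \<le> 1" for z unfolding I2_def ind_def by auto
  have bnd: "\<bar>x * y\<bar> \<le> 1" if "0 \<le> x" "x \<le> 1" "0 \<le> y" "y \<le> 1" for x y :: real
    using that by (simp add: abs_mult mult_le_one)
  have intI1: "integrable M I1"
    by (rule integrable_const_bound[where B=1]) (use I1b in auto)
  have intI2: "integrable M I2"
    by (rule integrable_const_bound[where B=1]) (use I2b in auto)
  have intH1: "integrable M H1"
    by (rule integrable_const_bound[where B=1]) (auto simp: H1_def intro!: bnd Hb I1b)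
  have intH2: "integrable M H2"
    by (rule integrable_const_bound[where B=1]) (auto simp: H2_def intro!: bnd Hb I2b)
  have intHH1: "integrable M HH1"
    by (rule integrable_const_bound[where B=1]) (auto simp: HH1_def intro!: bnd Hb I1b power_le_one)
  have intHH2: "integrable M HH2"
    by (rule integrable_const_bound[where B=1]) (auto simp: HH2_def intro!: bnd Hb I2b power_le_one)
  note pspace[simp] = prob_space.prob_space[OF assms(1)]
  note ints = intI1 intI2 intH1 intH2 intHH1 intHH2
  have p1: "integral\<^sup>L M I1 = p"
  proof -
    have "p = integral\<^sup>L M (indicator {z \<in> space M. snd z = 1})"
      unfolding p_def pos_prob_def by (simp add: Int_absorb2 subset_eq)
    also have "\<dots> = integral\<^sup>L M I1"
      by (rule Bochner_Integration.integral_cong) (auto simp: I1_def ind_def indicator_def)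
    finally show ?thesis by simp
  qed
  have p2: "integral\<^sup>L M I2 = q"
  proof -
    have "integral\<^sup>L M I2 = integral\<^sup>L M (\<lambda>z. 1 - I1 z)"
      by (rule integral_cong_AE) (use assms(2) in \<open>auto simp: I1_def I2_def ind_def\<close>)
    also have "\<dots> = q" using intI1 p1 by (simp add: q_def)
    finally show ?thesis .
  qed
  show "(\<forall>a b. \<exists>v. is_max_of (range (f_obj M h w a b)) v)
           \<and> (\<exists>v. is_min_of ((\<lambda>(a, b). Sup (range (f_obj M h w a b))) ` UNIV) v
                  \<and> P_obj M h w = 1 + v / (pos_prob M * (1 - pos_prob M)))"
    unfolding p_def[symmetric]
  proof (rule alg[where q=q and Aa="integral\<^sup>L M H1" and Ab="integral\<^sup>L M H2"
          and Ba="integral\<^sup>L M HH1" and Bb="integral\<^sup>L M HH2"])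
    show "0 < p" "p < 1" "q = 1 - p" using assms(5,6) by (auto simp: p_def q_def)
    show "f_obj M h w a b \<alpha> = q * integral\<^sup>L M HH1 - 2 * a * q * integral\<^sup>L M H1 + q * a\<^sup>2 * p +
         p * integral\<^sup>L M HH2 - 2 * b * p * integral\<^sup>L M H2 + p * b\<^sup>2 * q +
         2 * (1 + \<alpha>) * p * integral\<^sup>L M H2 - 2 * (1 + \<alpha>) * q * integral\<^sup>L M H1 - p * q * \<alpha>\<^sup>2"
      for a b \<alpha>
    proof -
      have "f_obj M h w a b \<alpha> = (\<integral>z. q * HH1 z - (2*a*q) * H1 z + (q*a\<^sup>2) * I1 z
         + p * HH2 z - (2*b*p) * H2 z + (p*b\<^sup>2) * I2 z + (2*(1+\<alpha>)*p) * H2 z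
         - (2*(1+\<alpha>)*q) * H1 z - p*q*\<alpha>\<^sup>2 \<partial>M)"
        unfolding f_obj_def p_def[symmetric]
        by (rule Bochner_Integration.integral_cong) (auto simp: F_obj_def HH1_def H1_def HH2_def H2_def H_def I1_def I2_def
             q_def power2_eq_square algebra_simps)
      also have "\<dots> = q * integral\<^sup>L M HH1 - 2 * a * q * integral\<^sup>L M H1 + q * a\<^sup>2 * p +
         p * integral\<^sup>L M HH2 - 2 * b * p * integral\<^sup>L M H2 + p * b\<^sup>2 * q +
         2 * (1 + \<alpha>) * p * integral\<^sup>L M H2 - 2 * (1 + \<alpha>) * q * integral\<^sup>L M H1 - p * q * \<alpha>\<^sup>2"
        using ints by (simp add: p1 p2)
      finally show ?thesis .
    qed
    show "P_obj M h w = (q * (p - 2 * integral\<^sup>L M H1 + integral\<^sup>L M HH1) +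
        2 * integral\<^sup>L M H2 * (p - integral\<^sup>L M H1) + p * integral\<^sup>L M HH2) / (p * q)"
proof -
      define G where "G = (\<lambda>zz::('x \<times> real) \<times> ('x \<times> real).
          (1 - H (fst zz) + H (snd zz))\<^sup>2 * I1 (fst zz) * I2 (snd zz))"
      define K where "K = (\<lambda>zz::('x \<times> real) \<times> ('x \<times> real). I1 (fst zz) * I2 (snd zz))"
      have Gm[measurable]: "G \<in> borel_measurable (M \<Otimes>\<^sub>M M)" unfolding G_def by measurable
      have Km[measurable]: "K \<in> borel_measurable (M \<Otimes>\<^sub>M M)" unfolding K_def by measurable
      have Gb: "\<bar>(1 - x + y)\<^sup>2 * i * j\<bar> \<le> 4"
        if "0 \<le> x" "x \<le> 1" "0 \<le> y" "y \<le> 1" "0 \<le> i" "i \<le> 1" "0 \<le> j" "j \<le> 1"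
        for x y i j :: real
      proof -
        have s0: "0 \<le> (1 - x + y)\<^sup>2" by simp
        have "(1 - x + y)\<^sup>2 \<le> 2\<^sup>2" using that by (intro power_mono) auto
        then have s4: "(1 - x + y)\<^sup>2 \<le> 4" by simp
        have ij: "0 \<le> i * j" "i * j \<le> 1" using that by (auto intro: mult_le_one)
        have "(1 - x + y)\<^sup>2 * (i * j) \<le> 4 * 1" using s0 s4 ij by (intro mult_mono) auto
        moreover have "0 \<le> (1 - x + y)\<^sup>2 * (i * j)" using s0 ij by simp
        ultimately show ?thesis by (simp add: mult.assoc)
      qed
      have intG: "integrable (M \<Otimes>\<^sub>M M) G"
        by (rule PP.P.integrable_const_bound[where B=4]) (auto simp: G_def intro!: Gb Hb I1b I2b)
      have intK: "integrable (M \<Otimes>\<^sub>M M) K"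
        by (rule PP.P.integrable_const_bound[where B=1]) (auto simp: K_def intro!: bnd I1b I2b)
      have num: "(\<integral>zz. G zz \<partial>(M \<Otimes>\<^sub>M M)) = q * p - 2 * q * integral\<^sup>L M H1 + q * integral\<^sup>L M HH1
          + 2 * integral\<^sup>L M H2 * p - 2 * integral\<^sup>L M H2 * integral\<^sup>L M H1 + integral\<^sup>L M HH2 * p"
      proof -
        have inner: "(\<integral>y. G (x, y) \<partial>M) = (1 - H x)\<^sup>2 * I1 x * q + (2 * (1 - H x) * I1 x) * integral\<^sup>L M H2
            + I1 x * integral\<^sup>L M HH2" for x
        proof -
          have "(\<integral>y. G (x, y) \<partial>M) = (\<integral>y. ((1 - H x)\<^sup>2 * I1 x) * I2 y + (2 * (1 - H x) * I1 x) * H2 y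
              + I1 x * HH2 y \<partial>M)"
            by (rule Bochner_Integration.integral_cong)
               (auto simp: G_def H2_def HH2_def power2_eq_square algebra_simps)
          also have "\<dots> = (1 - H x)\<^sup>2 * I1 x * q + (2 * (1 - H x) * I1 x) * integral\<^sup>L M H2
            + I1 x * integral\<^sup>L M HH2" using ints by (simp add: p2)
          finally show ?thesis .
        qed
        have "(\<integral>zz. G zz \<partial>(M \<Otimes>\<^sub>M M)) = (\<integral>x. (\<integral>y. G (x, y) \<partial>M) \<partial>M)"
          using PP.integral_fst'[OF intG] by simp
        also have "\<dots> = (\<integral>x. q * I1 x - (2 * q) * H1 x + q * HH1 x + (2 * integral\<^sup>L M H2) * I1 x
            - (2 * integral\<^sup>L M H2) * H1 x + integral\<^sup>L M HH2 * I1 x \<partial>M)"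
          unfolding inner
          by (rule Bochner_Integration.integral_cong)
             (auto simp: H1_def HH1_def power2_eq_square algebra_simps)
        also have "\<dots> = q * p - 2 * q * integral\<^sup>L M H1 + q * integral\<^sup>L M HH1
          + 2 * integral\<^sup>L M H2 * p - 2 * integral\<^sup>L M H2 * integral\<^sup>L M H1 + integral\<^sup>L M HH2 * p"
          using ints by (simp add: p1)
        finally show ?thesis .
      qed
      have den: "measure (M \<Otimes>\<^sub>M M) {zz \<in> space (M \<Otimes>\<^sub>M M). snd (fst zz) = 1 \<and> snd (snd zz) = -1}
          = p * q"
      proof -
        have "measure (M \<Otimes>\<^sub>M M) {zz \<in> space (M \<Otimes>\<^sub>M M). snd (fst zz) = 1 \<and> snd (snd zz) = -1}
          = integral\<^sup>L (M \<Otimes>\<^sub>M M) (indicator {zz \<in> space (M \<Otimes>\<^sub>M M). snd (fst zz) = 1 \<and> snd (snd zz) = -1})"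
          by (simp add: Int_absorb2 subset_eq)
        also have "\<dots> = integral\<^sup>L (M \<Otimes>\<^sub>M M) K"
          by (rule Bochner_Integration.integral_cong) (auto simp: K_def I1_def I2_def ind_def indicator_def)
        also have "\<dots> = (\<integral>x. (\<integral>y. K (x, y) \<partial>M) \<partial>M)"
          using PP.integral_fst'[OF intK] by simp
        also have "\<dots> = (\<integral>x. q * I1 x \<partial>M)"
          using intI2 by (simp add: K_def p2 mult.commute)
        also have "\<dots> = p * q" using intI1 by (simp add: p1)
        finally show ?thesis .
      qed
      have "P_obj M h w = (\<integral>zz. G zz \<partial>(M \<Otimes>\<^sub>M M)) /
          measure (M \<Otimes>\<^sub>M M) {zz \<in> space (M \<Otimes>\<^sub>M M). snd (fst zz) = 1 \<and> snd (snd zz) = -1}"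
        unfolding P_obj_def G_def H_def I1_def I2_def by simp
      also have "\<dots> = (q * (p - 2 * integral\<^sup>L M H1 + integral\<^sup>L M HH1) +
        2 * integral\<^sup>L M H2 * (p - integral\<^sup>L M H1) + p * integral\<^sup>L M HH2) / (p * q)"
        unfolding num den by (simp add: algebra_simps)
      finally show ?thesis .
    qed
  qed
qed
end
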